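(* If $\mathrm{char}(\Bbbk)=0$ or $\mathrm{char}(\Bbbk)=p\ge5$, then $P$ is minimally generated by $f_1=3y^3-4xyz+x^4-3y^3z^5-2xy^6z^2-x^2y^4z^3$, $f_2=2y^2z-3xz^2+x^3y-2y^7z^2-xy^5z^3$, $f_3=yz^2-3x^2y^2+2x^3z-y^6z^3-2xy^4z^4$, $f_4=z^3-2xy^3+x^2yz-y^5z^4$; in particular $\mu(P)=4$.
   Context: $\Bbbk$ is a field. $\rho:\Bbbk[[x,y,z]]\to\Bbbk[[t]]$ is the $\Bbbk$-algebra morphism with $\rho(x)=t^6+t^{31}$, $\rho(y)=t^8$, $\rho(z)=t^{10}$, and $P=\ker\rho$ (the first prime of Moh, $n=3$, $\lambda=25$). $\mu(P)$ is the minimal number of generators of $P$. *)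

theory Defs
  imports "HOL-Computational_Algebra.Formal_Power_Series"
begin

text \<open>The power series ring k[[x,y,z]] is modelled as k[[x]][[y]][[z]], i.e. the type
 ('a fps) fps fps, canonically isomorphic to k[[x,y,z]].\<close>

type_synonym 'a ps3 = "'a fps fps fps"

definition psX :: "'a::comm_ring_1 ps3" where "psX = fps_const (fps_const fps_X)"
definition psY :: "'a::comm_ring_1 ps3" where "psY = fps_const fps_X"
definition psZ :: "'a::comm_ring_1 ps3" where "psZ = fps_X"

definition ps3_coeff :: "'a ps3 \<Rightarrow> nat \<Rightarrow> nat \<Rightarrow> nat \<Rightarrow> 'a" where
  "ps3_coeff F i j l = fps_nth (fps_nth (fps_nth F l) j) i"

text \<open>The continuous k-algebra morphism rho: k[[x,y,z]] -> k[[t]] with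
 x |-> t^6 + t^31, y |-> t^8, z |-> t^10.  Since the images have positive order,
 only monomials with i,j,l <= n contribute to the coefficient of t^n.\<close>

definition rho :: "'a::comm_ring_1 ps3 \<Rightarrow> 'a fps" where
  "rho F = Abs_fps (\<lambda>n. \<Sum>i\<le>n. \<Sum>j\<le>n. \<Sum>l\<le>n.
      ps3_coeff F i j l * fps_nth ((fps_X ^ 6 + fps_X ^ 31) ^ i * fps_X ^ (8 * j) * fps_X ^ (10 * l)) n)"

definition primeP :: "'a::comm_ring_1 ps3 set" where
  "primeP = {F. rho F = 0}"

definition gen_ideal :: "'b::comm_ring_1 list \<Rightarrow> 'b set" where
  "gen_ideal gs = {(\<Sum>l<length gs. h l * gs ! l) | h. True}"

definition mu :: "'b::comm_ring_1 set \<Rightarrow> nat" where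
  "mu I = (LEAST n. \<exists>gs. length gs = n \<and> I = gen_ideal gs)"

definition f1 :: "'a::comm_ring_1 ps3" where
  "f1 = 3*psY^3 - 4*psX*psY*psZ + psX^4 - 3*psY^3*psZ^5 - 2*psX*psY^6*psZ^2 - psX^2*psY^4*psZ^3"
definition f2 :: "'a::comm_ring_1 ps3" where
  "f2 = 2*psY^2*psZ - 3*psX*psZ^2 + psX^3*psY - 2*psY^7*psZ^2 - psX*psY^5*psZ^3"
definition f3 :: "'a::comm_ring_1 ps3" where
  "f3 = psY*psZ^2 - 3*psX^2*psY^2 + 2*psX^3*psZ - psY^6*psZ^3 - 2*psX*psY^4*psZ^4"
definition f4 :: "'a::comm_ring_1 ps3" where
  "f4 = psZ^3 - 2*psX*psY^3 + psX^2*psY*psZ - psY^5*psZ^4"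

end

theory Submission
  imports Defs "Jordan_Normal_Form.Determinant"
begin


definition mk3 :: "(nat \<Rightarrow> nat \<Rightarrow> nat \<Rightarrow> 'a) \<Rightarrow> 'a ps3" where
  "mk3 c = Abs_fps (\<lambda>l. Abs_fps (\<lambda>j. Abs_fps (\<lambda>i. c i j l)))"

lemma c3_mk3[simp]: "ps3_coeff (mk3 c) i j l = c i j l"
  by (simp add: mk3_def ps3_coeff_def)

lemma ps3_ext: "(\<And>i j l. ps3_coeff A i j l = ps3_coeff B i j l) \<Longrightarrow> A = B"
  unfolding ps3_coeff_def by (intro fps_ext) blast

lemma c3_add[simp]: "ps3_coeff (A + B) i j l = ps3_coeff A i j l + ps3_coeff B i j l"
  by (simp add: ps3_coeff_def)
lemma c3_diff[simp]: "ps3_coeff (A - B) i j l = ps3_coeff A i j l - ps3_coeff B i j l"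
  by (simp add: ps3_coeff_def)
lemma c3_uminus[simp]: "ps3_coeff (- A) i j l = - ps3_coeff A i j l"
  by (simp add: ps3_coeff_def)
lemma c3_0[simp]: "ps3_coeff 0 i j l = 0"
  by (simp add: ps3_coeff_def)
lemma c3_1[simp]: "ps3_coeff 1 i j l = (if i = 0 \<and> j = 0 \<and> l = 0 then 1 else 0)"
  by (simp add: ps3_coeff_def)
lemma c3_sum: "ps3_coeff (sum f S) i j l = (\<Sum>k\<in>S. ps3_coeff (f k) i j l)"
  by (simp add: ps3_coeff_def fps_sum_nth)

lemma c3_mult: "ps3_coeff (A * B) i j l =
  (\<Sum>p\<le>l. \<Sum>q\<le>j. \<Sum>r\<le>i. ps3_coeff A r q p * ps3_coeff B (i - r) (j - q) (l - p))"
  by (simp add: ps3_coeff_def fps_mult_nth fps_sum_nth atLeast0AtMost)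

lemma c3_X[simp]: "ps3_coeff (psX * A) i j l = (if i = 0 then 0 else ps3_coeff A (i - 1) j l)"
  by (simp add: ps3_coeff_def psX_def fps_X_mult_nth)
lemma c3_Y[simp]: "ps3_coeff (psY * A) i j l = (if j = 0 then 0 else ps3_coeff A i (j - 1) l)"
  by (simp add: ps3_coeff_def psY_def fps_X_mult_nth)
lemma c3_Z[simp]: "ps3_coeff (psZ * A) i j l = (if l = 0 then 0 else ps3_coeff A i j (l - 1))"
  by (simp add: ps3_coeff_def psZ_def fps_X_mult_nth)


definition cst :: "'a::comm_ring_1 \<Rightarrow> 'a ps3" where "cst c = fps_const (fps_const (fps_const c))"

lemma c3_cst_mult[simp]: "ps3_coeff (cst c * A) i j l = c * ps3_coeff A i j l"
  by (simp add: cst_def ps3_coeff_def)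
lemma c3_cst[simp]: "ps3_coeff (cst c) i j l = (if i = 0 \<and> j = 0 \<and> l = 0 then c else 0)"
  using c3_cst_mult[of c 1 i j l] by simp

lemma cst_add: "cst (a + b) = cst a + cst b" by (simp add: cst_def)
lemma cst_mult: "cst (a * b) = cst a * cst b" by (simp add: cst_def)
lemma cst_1: "cst 1 = 1" by (simp add: cst_def)
lemma cst_0: "cst 0 = 0" by (simp add: cst_def)
lemma cst_numeral: "cst (numeral n) = numeral n" by (simp add: cst_def numeral_fps_const)

lemma c3_Xpow[simp]: "ps3_coeff (psX ^ a * A) i j l = (if a \<le> i then ps3_coeff A (i - a) j l else 0)"
  by (induction a arbitrary: i) (auto simp: mult.assoc)
lemma c3_Ypow[simp]: "ps3_coeff (psY ^ a * A) i j l = (if a \<le> j then ps3_coeff A i (j - a) l else 0)"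
  by (induction a arbitrary: j) (auto simp: mult.assoc)
lemma c3_Zpow[simp]: "ps3_coeff (psZ ^ a * A) i j l = (if a \<le> l then ps3_coeff A i j (l - a) else 0)"
  by (induction a arbitrary: l) (auto simp: mult.assoc)

definition pmon :: "nat \<Rightarrow> nat \<Rightarrow> nat \<Rightarrow> 'a::comm_ring_1 ps3" where
  "pmon a b c = psX ^ a * psY ^ b * psZ ^ c"

lemma c3_pmon_mult: "ps3_coeff (pmon a b c * A) i j l =
   (if a \<le> i \<and> b \<le> j \<and> c \<le> l then ps3_coeff A (i - a) (j - b) (l - c) else 0)"
  by (simp add: pmon_def mult.assoc)
lemma c3_pmon[simp]: "ps3_coeff (pmon a b c) i j l = (if i = a \<and> j = b \<and> l = c then 1 else 0)"
  using c3_pmon_mult[of a b c 1 i j l] by auto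

definition T :: "nat \<Rightarrow> nat \<Rightarrow> nat \<Rightarrow> 'a::comm_ring_1 fps" where
  "T i j l = (fps_X ^ 6 + fps_X ^ 31) ^ i * fps_X ^ (8 * j) * fps_X ^ (10 * l)"

lemma T_alt: "T i j l = fps_X ^ (6*i + 8*j + 10*l) * (1 + fps_X ^ 25) ^ i"
proof -
  have "(fps_X ^ 6 + fps_X ^ 31 :: 'a fps) = fps_X ^ 6 * (1 + fps_X ^ 25)"
    by (simp add: algebra_simps power_add[symmetric])
  then show ?thesis unfolding T_def by (simp add: power_mult_distrib power_add power_mult[symmetric] mult_ac)
qed

lemma T_vanish: "n < 6*i + 8*j + 10*l \<Longrightarrow> fps_nth (T i j l) n = 0"
  unfolding T_alt by (simp add: fps_X_power_mult_nth)

lemma rho_nth: "fps_nth (rho F) n = (\<Sum>i\<le>n. \<Sum>j\<le>n. \<Sum>l\<le>n. ps3_coeff F i j l * fps_nth (T i j l) n)"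
  by (simp add: rho_def T_def)

lemma box_shrink:
  assumes "n \<le> (N::nat)" and g0: "\<And>i j l. (n < i \<or> n < j \<or> n < l) \<Longrightarrow> g i j l = (0::'b::comm_monoid_add)"
  shows "(\<Sum>i\<le>N. \<Sum>j\<le>N. \<Sum>l\<le>N. g i j l) = (\<Sum>i\<le>n. \<Sum>j\<le>n. \<Sum>l\<le>n. g i j l)"
proof -
  have s: "{..n} \<subseteq> {..N}" using assms(1) by auto
  have "(\<Sum>i\<le>N. \<Sum>j\<le>N. \<Sum>l\<le>N. g i j l) = (\<Sum>i\<le>n. \<Sum>j\<le>N. \<Sum>l\<le>N. g i j l)"
  proof (rule sum.mono_neutral_right[OF _ s])
    show "\<forall>i\<in>{..N} - {..n}. (\<Sum>j\<le>N. \<Sum>l\<le>N. g i j l) = 0" using g0 by (auto simp: not_le)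
  qed auto
  also have "\<dots> = (\<Sum>i\<le>n. \<Sum>j\<le>n. \<Sum>l\<le>N. g i j l)"
  proof (rule sum.cong[OF refl], rule sum.mono_neutral_right[OF _ s])
    show "\<And>i. \<forall>j\<in>{..N} - {..n}. (\<Sum>l\<le>N. g i j l) = 0" using g0 by (auto simp: not_le)
  qed auto
  also have "\<dots> = (\<Sum>i\<le>n. \<Sum>j\<le>n. \<Sum>l\<le>n. g i j l)"
  proof (rule sum.cong[OF refl], rule sum.cong[OF refl], rule sum.mono_neutral_right[OF _ s])
    show "\<And>i j. \<forall>l\<in>{..N} - {..n}. g i j l = 0" using g0 by (auto simp: not_le)
  qed auto
  finally show ?thesis .
qed

lemma rho_nth_N: "n \<le> N \<Longrightarrow>
   fps_nth (rho F) n = (\<Sum>i\<le>N. \<Sum>j\<le>N. \<Sum>l\<le>N. ps3_coeff F i j l * fps_nth (T i j l) n)"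
  unfolding rho_nth by (rule box_shrink[symmetric]) (auto simp: T_vanish)


lemma box_shrink3:
  assumes "n \<le> (N1::nat)" "n \<le> N2" "n \<le> N3" and g0: "\<And>i j l. (n < i \<or> n < j \<or> n < l) \<Longrightarrow> g i j l = (0::'b::comm_monoid_add)"
  shows "(\<Sum>i\<le>N1. \<Sum>j\<le>N2. \<Sum>l\<le>N3. g i j l) = (\<Sum>i\<le>n. \<Sum>j\<le>n. \<Sum>l\<le>n. g i j l)"
proof -
  have s1: "{..n} \<subseteq> {..N1}" "{..n} \<subseteq> {..N2}" "{..n} \<subseteq> {..N3}" using assms(1-3) by auto
  have "(\<Sum>i\<le>N1. \<Sum>j\<le>N2. \<Sum>l\<le>N3. g i j l) = (\<Sum>i\<le>n. \<Sum>j\<le>N2. \<Sum>l\<le>N3. g i j l)"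
  proof (rule sum.mono_neutral_right[OF _ s1(1)])
    show "\<forall>i\<in>{..N1} - {..n}. (\<Sum>j\<le>N2. \<Sum>l\<le>N3. g i j l) = 0" using g0 by (auto simp: not_le)
  qed auto
  also have "\<dots> = (\<Sum>i\<le>n. \<Sum>j\<le>n. \<Sum>l\<le>N3. g i j l)"
  proof (rule sum.cong[OF refl], rule sum.mono_neutral_right[OF _ s1(2)])
    show "\<And>i. \<forall>j\<in>{..N2} - {..n}. (\<Sum>l\<le>N3. g i j l) = 0" using g0 by (auto simp: not_le)
  qed auto
  also have "\<dots> = (\<Sum>i\<le>n. \<Sum>j\<le>n. \<Sum>l\<le>n. g i j l)"
  proof (rule sum.cong[OF refl], rule sum.cong[OF refl], rule sum.mono_neutral_right[OF _ s1(3)])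
    show "\<And>i j. \<forall>l\<in>{..N3} - {..n}. g i j l = 0" using g0 by (auto simp: not_le)
  qed auto
  finally show ?thesis .
qed

lemma rho_nth_N3: "n \<le> N1 \<Longrightarrow> n \<le> N2 \<Longrightarrow> n \<le> N3 \<Longrightarrow>
   fps_nth (rho F) n = (\<Sum>i\<le>N1. \<Sum>j\<le>N2. \<Sum>l\<le>N3. ps3_coeff F i j l * fps_nth (T i j l) n)"
  unfolding rho_nth by (rule box_shrink3[symmetric]) (auto simp: T_vanish)

lemma rho_add: "rho (A + B) = rho A + rho B"
  by (rule fps_ext) (simp add: rho_nth algebra_simps sum.distrib)
lemma rho_diff: "rho (A - B) = rho A - rho B"
  by (rule fps_ext) (simp add: rho_nth algebra_simps sum_subtractf)
lemma rho_uminus: "rho (- A) = - rho A"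
  by (rule fps_ext) (simp add: rho_nth sum_negf)
lemma rho_0: "rho 0 = 0"
  by (rule fps_ext) (simp add: rho_nth)
lemma rho_cst: "rho (cst c * A) = fps_const c * rho A"
  by (rule fps_ext) (simp add: rho_nth sum_distrib_left mult.assoc)
lemma rho_sum: "rho (sum f S) = (\<Sum>k\<in>S. rho (f k))"
  by (induction S rule: infinite_finite_induct) (auto simp: rho_0 rho_add)

lemma T_Y: "T i (Suc j) l = fps_X ^ 8 * T i j l"
  by (simp add: T_def power_add mult_ac)
lemma T_Z: "T i j (Suc l) = fps_X ^ 10 * T i j l"
  by (simp add: T_def power_add mult_ac)
lemma T_X: "T (Suc i) j l = fps_X ^ 6 * T i j l + fps_X ^ 31 * T i j l"
  by (simp add: T_def algebra_simps)

lemma rho_Y: "rho (psY * A) = fps_X ^ 8 * rho A"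
proof (rule fps_ext)
  fix n
  have "fps_nth (rho (psY * A)) n = (\<Sum>i\<le>Suc n. \<Sum>j\<le>Suc n. \<Sum>l\<le>Suc n. ps3_coeff (psY * A) i j l * fps_nth (T i j l) n)"
    by (rule rho_nth_N3) auto
  also have "\<dots> = (\<Sum>i\<le>Suc n. \<Sum>j\<le>n. \<Sum>l\<le>Suc n. ps3_coeff A i j l * fps_nth (T i (Suc j) l) n)"
    by (simp add: sum.atMost_Suc_shift del: sum.atMost_Suc)
  also have "\<dots> = fps_nth (fps_X ^ 8 * rho A) n"
  proof (cases "n < 8")
    case True then show ?thesis by (simp add: T_Y fps_X_power_mult_nth)
  next
    case False
    have "fps_nth (rho A) (n - 8) = (\<Sum>i\<le>Suc n. \<Sum>j\<le>n. \<Sum>l\<le>Suc n. ps3_coeff A i j l * fps_nth (T i j l) (n-8))"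
      by (rule rho_nth_N3) auto
    then show ?thesis using False by (simp add: T_Y fps_X_power_mult_nth)
  qed
  finally show "fps_nth (rho (psY * A)) n = fps_nth (fps_X ^ 8 * rho A) n" .
qed

lemma rho_Z: "rho (psZ * A) = fps_X ^ 10 * rho A"
proof (rule fps_ext)
  fix n
  have "fps_nth (rho (psZ * A)) n = (\<Sum>i\<le>Suc n. \<Sum>j\<le>Suc n. \<Sum>l\<le>Suc n. ps3_coeff (psZ * A) i j l * fps_nth (T i j l) n)"
    by (rule rho_nth_N3) auto
  also have "\<dots> = (\<Sum>i\<le>Suc n. \<Sum>j\<le>Suc n. \<Sum>l\<le>n. ps3_coeff A i j l * fps_nth (T i j (Suc l)) n)"
    by (simp add: sum.atMost_Suc_shift del: sum.atMost_Suc)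
  also have "\<dots> = fps_nth (fps_X ^ 10 * rho A) n"
  proof (cases "n < 10")
    case True then show ?thesis by (simp add: T_Z fps_X_power_mult_nth)
  next
    case False
    have "fps_nth (rho A) (n - 10) = (\<Sum>i\<le>Suc n. \<Sum>j\<le>Suc n. \<Sum>l\<le>n. ps3_coeff A i j l * fps_nth (T i j l) (n-10))"
      by (rule rho_nth_N3) auto
    then show ?thesis using False by (simp add: T_Z fps_X_power_mult_nth)
  qed
  finally show "fps_nth (rho (psZ * A)) n = fps_nth (fps_X ^ 10 * rho A) n" .
qed

lemma rho_X: "rho (psX * A) = (fps_X ^ 6 + fps_X ^ 31) * rho A"
proof (rule fps_ext)
  fix n
  have "fps_nth (rho (psX * A)) n = (\<Sum>i\<le>Suc n. \<Sum>j\<le>Suc n. \<Sum>l\<le>Suc n. ps3_coeff (psX * A) i j l * fps_nth (T i j l) n)"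
    by (rule rho_nth_N3) auto
  also have "\<dots> = (\<Sum>i\<le>n. \<Sum>j\<le>Suc n. \<Sum>l\<le>Suc n. ps3_coeff A i j l * fps_nth (T (Suc i) j l) n)"
    by (simp add: sum.atMost_Suc_shift del: sum.atMost_Suc)
  also have "\<dots> = (\<Sum>i\<le>n. \<Sum>j\<le>Suc n. \<Sum>l\<le>Suc n. ps3_coeff A i j l * fps_nth (fps_X ^ 6 * T i j l) n)
                + (\<Sum>i\<le>n. \<Sum>j\<le>Suc n. \<Sum>l\<le>Suc n. ps3_coeff A i j l * fps_nth (fps_X ^ 31 * T i j l) n)"
    by (simp add: T_X distrib_left sum.distrib)
  also have "(\<Sum>i\<le>n. \<Sum>j\<le>Suc n. \<Sum>l\<le>Suc n. ps3_coeff A i j l * fps_nth (fps_X ^ 6 * T i j l) n)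
      = fps_nth (fps_X ^ 6 * rho A) n"
  proof (cases "n < 6")
    case True then show ?thesis by (simp add: fps_X_power_mult_nth)
  next
    case False
    have "fps_nth (rho A) (n - 6) = (\<Sum>i\<le>n. \<Sum>j\<le>Suc n. \<Sum>l\<le>Suc n. ps3_coeff A i j l * fps_nth (T i j l) (n-6))"
      by (rule rho_nth_N3) auto
    then show ?thesis using False by (simp add: fps_X_power_mult_nth)
  qed
  also have "(\<Sum>i\<le>n. \<Sum>j\<le>Suc n. \<Sum>l\<le>Suc n. ps3_coeff A i j l * fps_nth (fps_X ^ 31 * T i j l) n)
      = fps_nth (fps_X ^ 31 * rho A) n"
  proof (cases "n < 31")
    case True then show ?thesis by (simp add: fps_X_power_mult_nth)
  next
    case False
    have "fps_nth (rho A) (n - 31) = (\<Sum>i\<le>n. \<Sum>j\<le>Suc n. \<Sum>l\<le>Suc n. ps3_coeff A i j l * fps_nth (T i j l) (n-31))"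
      by (rule rho_nth_N3) auto
    then show ?thesis using False by (simp add: fps_X_power_mult_nth)
  qed
  finally show "fps_nth (rho (psX * A)) n = fps_nth ((fps_X ^ 6 + fps_X ^ 31) * rho A) n"
    by (simp add: distrib_right)
qed

lemma sum3_delta: "(\<Sum>i\<le>(n::nat). \<Sum>j\<le>(m::nat). \<Sum>l\<le>(k::nat). if i = 0 \<and> j = 0 \<and> l = 0 then c else 0) = c"
proof -
  have h1: "\<And>i j. (\<Sum>l\<le>k. if i = 0 \<and> j = 0 \<and> l = 0 then c else 0) = (if i = 0 \<and> j = 0 then c else 0)"
    by (auto simp: sum.delta)
  have h2: "\<And>i. (\<Sum>j\<le>m. if i = 0 \<and> j = 0 then c else 0) = (if i = 0 then c else 0)"
    by (auto simp: sum.delta)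
  show ?thesis by (simp only: h1 h2) (simp add: sum.delta)
qed

lemma rho_1: "rho 1 = 1"
proof (rule fps_ext)
  fix n
  have "fps_nth (rho 1) n = (\<Sum>i\<le>n. \<Sum>j\<le>n. \<Sum>l\<le>n. ps3_coeff (1::'a ps3) i j l * fps_nth (T i j l) n)"
    by (rule rho_nth)
  also have "\<dots> = fps_nth (T 0 0 0) n"
    by (simp add: if_distrib[of "\<lambda>x. x * _"] sum3_delta cong: if_cong)
  finally show "fps_nth (rho 1) n = fps_nth (1::'a fps) n" by (simp add: T_def)
qed


definition good :: "'a::comm_ring_1 ps3 \<Rightarrow> bool" where
  "good p \<longleftrightarrow> (\<forall>A. rho (A * p) = rho A * rho p)"

lemma rho_X1: "rho (psX :: 'a::comm_ring_1 ps3) = fps_X ^ 6 + fps_X ^ 31"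
  using rho_X[of "1::'a ps3"] by (simp add: rho_1)
lemma rho_Y1: "rho (psY :: 'a::comm_ring_1 ps3) = fps_X ^ 8"
  using rho_Y[of "1::'a ps3"] by (simp add: rho_1)
lemma rho_Z1: "rho (psZ :: 'a::comm_ring_1 ps3) = fps_X ^ 10"
  using rho_Z[of "1::'a ps3"] by (simp add: rho_1)
lemma rho_cst1: "rho (cst c :: 'a::comm_ring_1 ps3) = fps_const c"
  using rho_cst[of c "1::'a ps3"] by (simp add: rho_1)

lemma good_1[simp]: "good 1" by (simp add: good_def rho_1)
lemma good_X[simp]: "good psX" unfolding good_def
proof
  fix A :: "'a::comm_ring_1 ps3"
  have "rho (A * psX) = rho (psX * A)" by (simp add: mult.commute)
  also have "\<dots> = rho A * rho psX" by (simp only: rho_X rho_X1) (simp add: mult.commute)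
  finally show "rho (A * psX) = rho A * rho psX" .
qed
lemma good_Y[simp]: "good psY" unfolding good_def
proof
  fix A :: "'a::comm_ring_1 ps3"
  have "rho (A * psY) = rho (psY * A)" by (simp add: mult.commute)
  also have "\<dots> = rho A * rho psY" by (simp only: rho_Y rho_Y1) (simp add: mult.commute)
  finally show "rho (A * psY) = rho A * rho psY" .
qed
lemma good_Z[simp]: "good psZ" unfolding good_def
proof
  fix A :: "'a::comm_ring_1 ps3"
  have "rho (A * psZ) = rho (psZ * A)" by (simp add: mult.commute)
  also have "\<dots> = rho A * rho psZ" by (simp only: rho_Z rho_Z1) (simp add: mult.commute)
  finally show "rho (A * psZ) = rho A * rho psZ" .
qed
lemma good_cst[simp]: "good (cst c)" unfolding good_def
proof
  fix A :: "'a::comm_ring_1 ps3"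
  have "rho (A * cst c) = rho (cst c * A)" by (simp add: mult.commute)
  also have "\<dots> = rho A * rho (cst c)" by (simp only: rho_cst rho_cst1) (simp add: mult.commute)
  finally show "rho (A * cst c) = rho A * rho (cst c)" .
qed
lemma good_numeral[simp]: "good (numeral n)" using good_cst[of "numeral n"] by (simp add: cst_numeral)
lemma good_add[simp]: "good p \<Longrightarrow> good q \<Longrightarrow> good (p + q)"
  by (simp add: good_def distrib_left rho_add)
lemma good_diff[simp]: "good p \<Longrightarrow> good q \<Longrightarrow> good (p - q)"
  by (simp add: good_def right_diff_distrib rho_diff)
lemma good_mult[simp]: "good p \<Longrightarrow> good q \<Longrightarrow> good (p * q)"
  unfolding good_def by (simp add: mult.assoc[symmetric])
lemma good_pow[simp]: "good p \<Longrightarrow> good (p ^ k)"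
  by (induction k) auto

lemma rho_mult_good: "good q \<Longrightarrow> rho (A * q) = rho A * rho q"
  by (simp add: good_def)
lemma rho_pow_good: "good q \<Longrightarrow> rho (q ^ k) = rho q ^ k"
  by (induction k) (simp_all add: rho_1 rho_mult_good mult.commute)
lemma rho_numeral: "rho (numeral n :: 'a::comm_ring_1 ps3) = numeral n"
  using rho_cst1[of "numeral n"] by (simp add: cst_numeral numeral_fps_const)

lemmas rho_simps = rho_add rho_diff rho_uminus rho_mult_good rho_pow_good rho_numeral rho_X1 rho_Y1 rho_Z1 rho_1


lemma good_fs: "good f1" "good f2" "good f3" "good f4"
  unfolding f1_def f2_def f3_def f4_def by simp_all

lemma binom3: "((a::'b::comm_ring_1) + b) ^ 3 = a^3 + 3*a^2*b + 3*a*b^2 + b^3"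
  by (simp add: algebra_simps power2_eq_square power3_eq_cube)
lemma binom4: "((a::'b::comm_ring_1) + b) ^ 4 = a^4 + 4*a^3*b + 6*a^2*b^2 + 4*a*b^3 + b^4"
proof -
  have "(a+b)^4 = ((a+b)^2)^2" by (simp flip: power_mult)
  then show ?thesis by (simp add: algebra_simps power2_eq_square power3_eq_cube power4_eq_xxxx)
qed
lemma binom2: "((a::'b::comm_ring_1) + b) ^ 2 = a^2 + 2*a*b + b^2"
  by (simp add: algebra_simps power2_eq_square)


lemma rho_f1: "rho (f1 :: 'a::comm_ring_1 ps3) = 0"
  unfolding f1_def by (simp add: rho_simps good_fs) (simp add: binom2 binom3 binom4 algebra_simps flip: power_add power_mult)
lemma rho_f2: "rho (f2 :: 'a::comm_ring_1 ps3) = 0"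
  unfolding f2_def by (simp add: rho_simps good_fs) (simp add: binom2 binom3 binom4 algebra_simps flip: power_add power_mult)
lemma rho_f3: "rho (f3 :: 'a::comm_ring_1 ps3) = 0"
  unfolding f3_def by (simp add: rho_simps good_fs) (simp add: binom2 binom3 binom4 algebra_simps flip: power_add power_mult)
lemma rho_f4: "rho (f4 :: 'a::comm_ring_1 ps3) = 0"
  unfolding f4_def by (simp add: rho_simps good_fs) (simp add: binom2 binom3 binom4 algebra_simps flip: power_add power_mult)


definition agree :: "nat \<Rightarrow> 'a::comm_ring_1 ps3 \<Rightarrow> 'a ps3 \<Rightarrow> bool" where
  "agree n A B \<longleftrightarrow> (\<forall>i<n. \<forall>j l. ps3_coeff A i j l = ps3_coeff B i j l)"

lemma agree_refl[simp]: "agree n A A" by (simp add: agree_def)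
lemma agree_sym: "agree n A B \<Longrightarrow> agree n B A" by (simp add: agree_def)
lemma agree_trans: "agree n A B \<Longrightarrow> agree n B C \<Longrightarrow> agree n A C" by (simp add: agree_def)
lemma agree_add: "agree n A B \<Longrightarrow> agree n C D \<Longrightarrow> agree n (A + C) (B + D)" by (simp add: agree_def)
lemma agree_sum: "(\<And>k. k \<in> S \<Longrightarrow> agree n (f k) (g k)) \<Longrightarrow> agree n (sum f S) (sum g S)"
  by (simp add: agree_def c3_sum)
lemma agree_mult: "agree n A B \<Longrightarrow> agree n (A * C) (B * C)"
  unfolding agree_def c3_mult by (auto intro!: sum.cong)
lemma agree_Xpow: "agree n (psX ^ n * H) 0" by (simp add: agree_def)
lemma agree_all: "(\<And>n. agree n A B) \<Longrightarrow> A = B"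
  unfolding agree_def by (rule ps3_ext) blast

definition xsum :: "(nat \<Rightarrow> 'a::comm_ring_1 ps3) \<Rightarrow> 'a ps3" where
  "xsum H = mk3 (\<lambda>i j l. \<Sum>k\<le>i. ps3_coeff (H k) (i - k) j l)"

lemma agree_xsum: "agree n (\<Sum>k<n. psX ^ k * H k) (xsum H)"
  unfolding agree_def
proof (intro allI impI)
  fix i j l assume "i < n"
  have "ps3_coeff (\<Sum>k<n. psX ^ k * H k) i j l = (\<Sum>k<n. if k \<le> i then ps3_coeff (H k) (i - k) j l else 0)"
    by (simp add: c3_sum)
  also have "\<dots> = (\<Sum>k\<in>{..<n} \<inter> {k. k \<le> i}. ps3_coeff (H k) (i - k) j l)"
    by (simp add: sum.inter_restrict)
  also have "{..<n} \<inter> {k. k \<le> i} = {..i}" using \<open>i < n\<close> by auto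
  finally show "ps3_coeff (\<Sum>k<n. psX ^ k * H k) i j l = ps3_coeff (xsum H) i j l"
    by (simp add: xsum_def)
qed


definition bb :: "nat \<Rightarrow> 'a::comm_ring_1 ps3" where
  "bb m = [1, psY, psZ, psY^2 - psX*psZ, psY*psZ - psX^3, psZ^2 - psX^2*psY] ! m"
definition fl :: "nat \<Rightarrow> 'a::comm_ring_1 ps3" where
  "fl m = [f1, f2, f3, f4] ! m"

lemma pmon_simps: "pmon 0 0 0 = 1" "pmon 0 1 0 = psY" "pmon 0 0 1 = psZ" "pmon 0 2 0 = psY^2"
  "pmon 0 1 1 = psY * psZ" "pmon 0 0 2 = psZ^2" "pmon 0 3 0 = psY^3" "pmon 0 2 1 = psY^2*psZ"
  "pmon 0 1 2 = psY*psZ^2" "pmon 0 0 3 = psZ^3" "pmon 0 5 1 = psY^5*psZ" "pmon 0 0 5 = psZ^5"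
  by (simp_all add: pmon_def)

lemma split_x: "F = mk3 (\<lambda>i j l. if i = 0 then ps3_coeff F 0 j l else 0) + psX * mk3 (\<lambda>i j l. ps3_coeff F (Suc i) j l)"
  by (rule ps3_ext) auto

lemma decomp0:
  "mk3 (\<lambda>i j l. if i = 0 then ps3_coeff F 0 j l else 0) =
     cst (ps3_coeff F 0 0 0) * pmon 0 0 0 + cst (ps3_coeff F 0 1 0) * pmon 0 1 0 + cst (ps3_coeff F 0 0 1) * pmon 0 0 1
   + cst (ps3_coeff F 0 2 0) * pmon 0 2 0 + cst (ps3_coeff F 0 1 1) * pmon 0 1 1 + cst (ps3_coeff F 0 0 2) * pmon 0 0 2
   + pmon 0 3 0 * mk3 (\<lambda>i j l. if i = 0 then ps3_coeff F 0 (j+3) l else 0)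
   + pmon 0 2 1 * mk3 (\<lambda>i j l. if i = 0 \<and> j = 0 then ps3_coeff F 0 2 (l+1) else 0)
   + pmon 0 1 2 * mk3 (\<lambda>i j l. if i = 0 \<and> j = 0 then ps3_coeff F 0 1 (l+2) else 0)
   + pmon 0 0 3 * mk3 (\<lambda>i j l. if i = 0 \<and> j = 0 then ps3_coeff F 0 0 (l+3) else 0)"
proof (rule ps3_ext)
  fix i j l
  show "ps3_coeff (mk3 (\<lambda>i j l. if i = 0 then ps3_coeff F 0 j l else 0)) i j l = ps3_coeff (
     cst (ps3_coeff F 0 0 0) * pmon 0 0 0 + cst (ps3_coeff F 0 1 0) * pmon 0 1 0 + cst (ps3_coeff F 0 0 1) * pmon 0 0 1
   + cst (ps3_coeff F 0 2 0) * pmon 0 2 0 + cst (ps3_coeff F 0 1 1) * pmon 0 1 1 + cst (ps3_coeff F 0 0 2) * pmon 0 0 2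
   + pmon 0 3 0 * mk3 (\<lambda>i j l. if i = 0 then ps3_coeff F 0 (j+3) l else 0)
   + pmon 0 2 1 * mk3 (\<lambda>i j l. if i = 0 \<and> j = 0 then ps3_coeff F 0 2 (l+1) else 0)
   + pmon 0 1 2 * mk3 (\<lambda>i j l. if i = 0 \<and> j = 0 then ps3_coeff F 0 1 (l+2) else 0)
   + pmon 0 0 3 * mk3 (\<lambda>i j l. if i = 0 \<and> j = 0 then ps3_coeff F 0 0 (l+3) else 0)) i j l"
  proof (cases "i = 0")
    case False then show ?thesis by (simp add: c3_pmon_mult)
  next
    case True
    consider "j \<ge> 3" | "j = 2" | "j = 1" | "j = 0" by linarith
    then show ?thesis
    proof cases
      case 1 then show ?thesis using True by (simp add: c3_pmon_mult)
    next
      case 2 then show ?thesis using True by (cases l) (simp_all add: c3_pmon_mult)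
    next
      case 3 then show ?thesis using True
        proof -
        consider "l = 0" | "l = 1" | m where "l = Suc (Suc m)" by (metis One_nat_def not0_implies_Suc)
        then show ?thesis using True 3 by cases (auto simp: c3_pmon_mult)
      qed
    next
      case 4 then show ?thesis using True
        proof -
        consider "l = 0" | "l = 1" | "l = 2" | m where "l = Suc (Suc (Suc m))"
          by (metis One_nat_def Suc_1 not0_implies_Suc)
        then show ?thesis using True 4 by cases (auto simp: c3_pmon_mult numeral_3_eq_3)
      qed
    qed
  qed
qed

definition U1 :: "'a::comm_ring_1 ps3" where "U1 = mk3 (\<lambda>i j l. if i = 0 \<and> j = 0 \<and> 5 dvd l then 1 else 0)"
definition U2 :: "'a::comm_ring_1 ps3" where "U2 = mk3 (\<lambda>i j l. if i = 0 \<and> j = 5 * l then 1 else 0)"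

lemma dvd5: "5 \<le> l \<Longrightarrow> (5 dvd (l - 5)) = (5 dvd (l::nat))"
  by (metis dvd_add_triv_right_iff le_add_diff_inverse2)

lemma U1_inv: "(1 - pmon 0 0 5) * U1 = 1"
  by (rule ps3_ext) (auto simp: algebra_simps c3_pmon_mult U1_def dvd5)

lemma U2_inv: "(1 - pmon 0 5 1) * U2 = 1"
  by (rule ps3_ext) (auto simp: algebra_simps c3_pmon_mult U2_def)


lemma sum4: "(\<Sum>m<4. g m) = g 0 + g 1 + g 2 + g (3::nat)"
  by (simp add: eval_nat_numeral)
lemma sum6: "(\<Sum>m<6. g m) = g 0 + g 1 + g 2 + g 3 + g 4 + g (5::nat)"
  by (simp add: eval_nat_numeral)

lemma bb_simps: "bb 0 = 1" "bb 1 = psY" "bb 2 = psZ" "bb 3 = psY^2 - psX*psZ"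
  "bb 4 = psY*psZ - psX^3" "bb 5 = psZ^2 - psX^2*psY"
  by (simp_all add: bb_def eval_nat_numeral)
lemma fl_simps: "fl 0 = f1" "fl 1 = f2" "fl 2 = f3" "fl 3 = f4"
  by (simp_all add: fl_def eval_nat_numeral)

lemma cst_inv: "(c::'a::field) \<noteq> 0 \<Longrightarrow> cst (inverse c) * cst c = 1"
  by (simp flip: cst_mult add: cst_1)

lemma one_step:
  assumes h2: "(2::'a::field) \<noteq> 0" and h3: "(3::'a) \<noteq> 0"
  shows "\<exists>G c F'. F = (\<Sum>m<4. G m * fl m) + (\<Sum>m<6. cst (c m) * bb m) + psX * (F' :: 'a ps3)"
proof -
  define F0 where "F0 = mk3 (\<lambda>i j l. if i = 0 then ps3_coeff F 0 j l else 0)"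
  define F1 where "F1 = mk3 (\<lambda>i j l. ps3_coeff F (Suc i) j l)"
  define R1 where "R1 = mk3 (\<lambda>i j l. if i = 0 then ps3_coeff F 0 (j+3) l else 0)"
  define R2 where "R2 = mk3 (\<lambda>i j l. if i = 0 \<and> j = 0 then ps3_coeff F 0 2 (l+1) else 0)"
  define R3 where "R3 = mk3 (\<lambda>i j l. if i = 0 \<and> j = 0 then ps3_coeff F 0 1 (l+2) else 0)"
  define R4 where "R4 = mk3 (\<lambda>i j l. if i = 0 \<and> j = 0 then ps3_coeff F 0 0 (l+3) else 0)"
  define c where "c = (\<lambda>m. [ps3_coeff F 0 0 0, ps3_coeff F 0 1 0, ps3_coeff F 0 0 1,
       ps3_coeff F 0 2 0, ps3_coeff F 0 1 1, ps3_coeff F 0 0 2] ! m)"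
  have c_simps: "c 0 = ps3_coeff F 0 0 0" "c 1 = ps3_coeff F 0 1 0" "c 2 = ps3_coeff F 0 0 1"
    "c 3 = ps3_coeff F 0 2 0" "c 4 = ps3_coeff F 0 1 1" "c 5 = ps3_coeff F 0 0 2"
    by (simp_all add: c_def eval_nat_numeral)
  have hF: "F = F0 + psX * F1" unfolding F0_def F1_def by (rule split_x)
  have hF0: "F0 = cst (c 0) * pmon 0 0 0 + cst (c 1) * pmon 0 1 0 + cst (c 2) * pmon 0 0 1
     + cst (c 3) * pmon 0 2 0 + cst (c 4) * pmon 0 1 1 + cst (c 5) * pmon 0 0 2
     + pmon 0 3 0 * R1 + pmon 0 2 1 * R2 + pmon 0 1 2 * R3 + pmon 0 0 3 * R4"
    unfolding F0_def R1_def R2_def R3_def R4_def c_simps by (rule decomp0)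
  define E1 :: "'a ps3" where "E1 = - 4*psY*psZ + psX^3 - 2*psY^6*psZ^2 - psX*psY^4*psZ^3"
  define E2 :: "'a ps3" where "E2 = - 3*psZ^2 + psX^2*psY - psY^5*psZ^3"
  define E3 :: "'a ps3" where "E3 = - 3*psX*psY^2 + 2*psX^2*psZ - 2*psY^4*psZ^4"
  define E4 :: "'a ps3" where "E4 = - 2*psY^3 + psX*psY*psZ"
  have hf1: "f1 = 3 * pmon 0 3 0 * (1 - pmon 0 0 5) + psX * E1"
    unfolding f1_def E1_def pmon_def by (simp add: algebra_simps flip: power_add, (simp add: algebra_simps power2_eq_square power3_eq_cube power4_eq_xxxx flip: power_Suc)?)
  have hf2: "f2 = 2 * pmon 0 2 1 * (1 - pmon 0 5 1) + psX * E2"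
    unfolding f2_def E2_def pmon_def by (simp add: algebra_simps flip: power_add, (simp add: algebra_simps power2_eq_square power3_eq_cube power4_eq_xxxx flip: power_Suc)?)
  have hf3: "f3 = pmon 0 1 2 * (1 - pmon 0 5 1) + psX * E3"
    unfolding f3_def E3_def pmon_def by (simp add: algebra_simps flip: power_add, (simp add: algebra_simps power2_eq_square power3_eq_cube power4_eq_xxxx flip: power_Suc)?)
  have hf4: "f4 = pmon 0 0 3 * (1 - pmon 0 5 1) + psX * E4"
    unfolding f4_def E4_def pmon_def by (simp add: algebra_simps flip: power_add, (simp add: algebra_simps power2_eq_square power3_eq_cube power4_eq_xxxx flip: power_Suc)?)
  define G1 where "G1 = cst (inverse 3) * R1 * U1"
  define G2 where "G2 = cst (inverse 2) * R2 * U2"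
  define G3 where "G3 = R3 * U2"
  define G4 where "G4 = R4 * U2"
  have i3: "cst (inverse 3) * (3::'a ps3) = 1" using cst_inv[OF h3] by (simp add: cst_numeral)
  have i2: "cst (inverse 2) * (2::'a ps3) = 1" using cst_inv[OF h2] by (simp add: cst_numeral)
  have g1: "G1 * f1 = pmon 0 3 0 * R1 + psX * (G1 * E1)"
  proof -
    have "G1 * f1 = (cst (inverse 3) * 3) * ((1 - pmon 0 0 5) * U1) * (pmon 0 3 0 * R1) + psX * (G1 * E1)"
      unfolding G1_def hf1 by (simp add: algebra_simps)
    then show ?thesis by (simp only: i3 U1_inv mult_1_left)
  qed
  have g2: "G2 * f2 = pmon 0 2 1 * R2 + psX * (G2 * E2)"
  proof -
    have "G2 * f2 = (cst (inverse 2) * 2) * ((1 - pmon 0 5 1) * U2) * (pmon 0 2 1 * R2) + psX * (G2 * E2)"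
      unfolding G2_def hf2 by (simp add: algebra_simps)
    then show ?thesis by (simp only: i2 U2_inv mult_1_left)
  qed
  have g3: "G3 * f3 = pmon 0 1 2 * R3 + psX * (G3 * E3)"
  proof -
    have "G3 * f3 = ((1 - pmon 0 5 1) * U2) * (pmon 0 1 2 * R3) + psX * (G3 * E3)"
      unfolding G3_def hf3 by (simp add: algebra_simps)
    then show ?thesis by (simp only: U2_inv mult_1_left)
  qed
  have g4: "G4 * f4 = pmon 0 0 3 * R4 + psX * (G4 * E4)"
  proof -
    have "G4 * f4 = ((1 - pmon 0 5 1) * U2) * (pmon 0 0 3 * R4) + psX * (G4 * E4)"
      unfolding G4_def hf4 by (simp add: algebra_simps)
    then show ?thesis by (simp only: U2_inv mult_1_left)
  qed
  define G where "G = (\<lambda>m. [G1, G2, G3, G4] ! m)"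
  have G_simps: "G 0 = G1" "G 1 = G2" "G 2 = G3" "G 3 = G4"
    by (simp_all add: G_def eval_nat_numeral)
  define F' where "F' = F1 - (G1*E1 + G2*E2 + G3*E3 + G4*E4) + cst (c 3) * psZ + cst (c 4) * psX^2
      + cst (c 5) * (psX * psY)"
  have "F = (\<Sum>m<4. G m * fl m) + (\<Sum>m<6. cst (c m) * bb m) + psX * F'"
    unfolding sum4 sum6 G_simps fl_simps bb_simps g1 g2 g3 g4
    by (subst hF, subst hF0[unfolded pmon_simps]) (simp add: F'_def pmon_def algebra_simps power2_eq_square power3_eq_cube)
  then show ?thesis by blast
qed


lemma swap_lemma: "(\<Sum>k<n. psX ^ k * (\<Sum>m<M. G k m * g m)) = (\<Sum>m<M. (\<Sum>k<n. psX ^ k * G k m) * (g m :: 'a::comm_ring_1 ps3))"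
proof -
  have "(\<Sum>k<n. psX ^ k * (\<Sum>m<M. G k m * g m)) = (\<Sum>k<n. \<Sum>m<M. psX ^ k * G k m * g m)"
    by (simp only: sum_distrib_left mult.assoc)
  also have "\<dots> = (\<Sum>m<M. \<Sum>k<n. psX ^ k * G k m * g m)" by (rule sum.swap)
  also have "\<dots> = (\<Sum>m<M. (\<Sum>k<n. psX ^ k * G k m) * g m)" by (simp only: sum_distrib_right)
  finally show ?thesis .
qed

lemma normal_form:
  assumes h2: "(2::'a::field) \<noteq> 0" and h3: "(3::'a) \<noteq> 0"
  shows "\<exists>G a. F = (\<Sum>m<4. G m * fl m) + (\<Sum>m<6. xsum (\<lambda>k. cst (a k m)) * bb m :: 'a ps3)"
proof -
  have "\<forall>F. \<exists>p. F = (\<Sum>m<4. fst p m * fl m) + (\<Sum>m<6. cst (fst (snd p) m) * bb m) + psX * (snd (snd p) :: 'a ps3)"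
  proof
    fix F :: "'a ps3"
    obtain G c F' where "F = (\<Sum>m<4. G m * fl m) + (\<Sum>m<6. cst (c m) * bb m) + psX * F'"
      using one_step[OF h2 h3] by blast
    then show "\<exists>p. F = (\<Sum>m<4. fst p m * fl m) + (\<Sum>m<6. cst (fst (snd p) m) * bb m) + psX * (snd (snd p) :: 'a ps3)"
      by (intro exI[of _ "(G, c, F')"]) simp
  qed
  then obtain P where P0: "\<forall>F. F = (\<Sum>m<4. fst (P F) m * fl m) + (\<Sum>m<6. cst (fst (snd (P F)) m) * bb m) + psX * (snd (snd (P F)) :: 'a ps3)"
    by (rule choice[THEN exE])
  have P: "F = (\<Sum>m<4. fst (P F) m * fl m) + (\<Sum>m<6. cst (fst (snd (P F)) m) * bb m) + psX * (snd (snd (P F)))" for F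
    using P0 by blast
  define Fs where "Fs k = ((\<lambda>F. snd (snd (P F))) ^^ k) F" for k
  define Gk where "Gk k m = fst (P (Fs k)) m" for k m
  define ck where "ck k m = fst (snd (P (Fs k))) m" for k m
  define S where "S k = (\<Sum>m<4. Gk k m * fl m) + (\<Sum>m<6. cst (ck k m) * bb m)" for k
  have FsS: "Fs (Suc k) = snd (snd (P (Fs k)))" for k by (simp add: Fs_def)
  have stepk: "Fs k = S k + psX * Fs (Suc k)" for k
    unfolding S_def Gk_def ck_def FsS by (rule P)
  have ind: "F = (\<Sum>k<n. psX ^ k * S k) + psX ^ n * Fs n" for n
  proof (induction n)
    case 0 then show ?case by (simp add: Fs_def)
  next
    case (Suc n)
    have "psX ^ n * Fs n = psX ^ n * S n + psX ^ Suc n * Fs (Suc n)"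
      using stepk[of n] by (simp add: algebra_simps)
    with Suc show ?case by (simp add: algebra_simps)
  qed
  define Gt where "Gt m = xsum (\<lambda>k. Gk k m)" for m
  have "agree n F ((\<Sum>m<4. Gt m * fl m) + (\<Sum>m<6. xsum (\<lambda>k. cst (ck k m)) * bb m))" for n
  proof -
    have a1: "agree n F (\<Sum>k<n. psX ^ k * S k)"
    proof -
      have "agree n ((\<Sum>k<n. psX ^ k * S k) + psX ^ n * Fs n) ((\<Sum>k<n. psX ^ k * S k) + 0)"
        by (intro agree_add agree_refl agree_Xpow)
      then show ?thesis using ind[of n] by simp
    qed
    have e: "(\<Sum>k<n. psX ^ k * S k) = (\<Sum>m<4. (\<Sum>k<n. psX ^ k * Gk k m) * fl m)
         + (\<Sum>m<6. (\<Sum>k<n. psX ^ k * cst (ck k m)) * bb m)"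
      unfolding S_def distrib_left sum.distrib swap_lemma ..
    have a2: "agree n ((\<Sum>m<4. (\<Sum>k<n. psX ^ k * Gk k m) * fl m)
         + (\<Sum>m<6. (\<Sum>k<n. psX ^ k * cst (ck k m)) * bb m))
        ((\<Sum>m<4. Gt m * fl m) + (\<Sum>m<6. xsum (\<lambda>k. cst (ck k m)) * bb m))"
      unfolding Gt_def by (rule agree_add; rule agree_sum; rule agree_mult; rule agree_xsum)
    have a3: "agree n F ((\<Sum>m<4. (\<Sum>k<n. psX ^ k * Gk k m) * fl m)
         + (\<Sum>m<6. (\<Sum>k<n. psX ^ k * cst (ck k m)) * bb m))" using a1 unfolding e .
    show ?thesis by (rule agree_trans[OF a3 a2])
  qed
  then have "F = (\<Sum>m<4. Gt m * fl m) + (\<Sum>m<6. xsum (\<lambda>k. cst (ck k m)) * bb m)"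
    by (rule agree_all)
  then show ?thesis by blast
qed


lemma c3_xs: "ps3_coeff (xsum (\<lambda>k. cst (\<alpha> k))) i j l = (if j = 0 \<and> l = 0 then \<alpha> i else 0)"
proof -
  have "ps3_coeff (xsum (\<lambda>k. cst (\<alpha> k))) i j l = (\<Sum>k\<le>i. if k = i then (if j = 0 \<and> l = 0 then \<alpha> k else 0) else 0)"
    unfolding xsum_def c3_mk3 c3_cst by (intro sum.cong) auto
  then show ?thesis by (simp add: sum.delta)
qed

lemma sum2_delta: "(\<Sum>j\<le>(n::nat). \<Sum>l\<le>(m::nat). (if j = 0 \<and> l = 0 then a else 0) * f j l) = (a::'b::comm_ring_1) * f 0 0"
proof -
  have h1: "\<And>j. (\<Sum>l\<le>m. (if j = 0 \<and> l = 0 then a else 0) * f j l) = (if j = 0 then a * f j 0 else 0)"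
    by (auto simp: sum.delta if_distrib[of "\<lambda>x. x * _"] cong: if_cong)
  show ?thesis by (simp only: h1) (simp add: sum.delta)
qed

lemma rho_xs_nth: "fps_nth (rho (xsum (\<lambda>k. cst (\<alpha> k)))) n = (\<Sum>i\<le>n. \<alpha> i * fps_nth (T i 0 0) n)"
  unfolding rho_nth c3_xs sum2_delta ..

lemma T_i00_diag: "fps_nth (T i 0 0) (6 * i) = 1"
  unfolding T_alt by (simp add: fps_X_power_mult_nth fps_nth_power_0)

lemma rho_xs_subdeg:
  fixes \<alpha> :: "nat \<Rightarrow> 'a::field"
  assumes "\<alpha> \<noteq> (\<lambda>_. 0)"
  shows "rho (xsum (\<lambda>k. cst (\<alpha> k))) \<noteq> 0 \<and> subdegree (rho (xsum (\<lambda>k. cst (\<alpha> k)))) = 6 * (LEAST i. \<alpha> i \<noteq> 0)"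
proof -
  define s where "s = (LEAST i. \<alpha> i \<noteq> 0)"
  have ex: "\<exists>i. \<alpha> i \<noteq> 0" using assms by auto
  have as: "\<alpha> s \<noteq> 0" unfolding s_def using LeastI_ex[OF ex] .
  have lt: "i < s \<Longrightarrow> \<alpha> i = 0" for i unfolding s_def using not_less_Least by blast
  let ?r = "rho (xsum (\<lambda>k. cst (\<alpha> k)))"
  have z: "\<alpha> i * fps_nth (T i 0 0) n = 0" if "n < 6 * s" for i n
  proof (cases "i < s")
    case True then show ?thesis using lt by simp
  next
    case False then have "n < 6 * i + 8 * 0 + 10 * 0" using that by simp
    then show ?thesis by (simp add: T_vanish)
  qed
  have r0: "fps_nth ?r n = 0" if "n < 6 * s" for n
    unfolding rho_xs_nth using z[OF that] by (simp add: sum.neutral)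
  have "fps_nth ?r (6 * s) = (\<Sum>i\<le>6*s. if i = s then \<alpha> s else 0)"
    unfolding rho_xs_nth
  proof (intro sum.cong refl)
    fix i assume "i \<in> {..6*s}"
    show "\<alpha> i * fps_nth (T i 0 0) (6 * s) = (if i = s then \<alpha> s else 0)"
    proof (cases "i < s")
      case True then show ?thesis using lt by simp
    next
      case False
      show ?thesis
      proof (cases "i = s")
        case True then show ?thesis by (simp add: T_i00_diag)
      next
        case ne: False
        with False have "6 * s < 6 * i + 8 * 0 + 10 * 0" by simp
        then show ?thesis using ne by (simp add: T_vanish)
      qed
    qed
  qed
  also have "\<dots> = \<alpha> s" by (simp add: sum.delta)
  finally have r1: "fps_nth ?r (6 * s) = \<alpha> s" .
  have "?r \<noteq> 0" using r1 as by auto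
  moreover have "subdegree ?r = 6 * s" using r1 as r0 by (intro subdegreeI) auto
  ultimately show ?thesis unfolding s_def by simp
qed

lemma sum_distinct_subdeg:
  fixes t :: "nat \<Rightarrow> 'a::comm_ring_1 fps"
  assumes fin: "finite M" and ne: "M \<noteq> {}" and nz: "\<And>m. m \<in> M \<Longrightarrow> t m \<noteq> 0"
    and inj: "\<And>m m'. m \<in> M \<Longrightarrow> m' \<in> M \<Longrightarrow> subdegree (t m) = subdegree (t m') \<Longrightarrow> m = m'"
  shows "sum t M \<noteq> 0"
proof -
  define D where "D = (\<lambda>m. subdegree (t m)) ` M"
  have fD: "finite D" "D \<noteq> {}" using fin ne unfolding D_def by auto
  then have "Min D \<in> D" by (rule Min_in)
  then obtain m0 where m0M: "m0 \<in> M" and m0d: "subdegree (t m0) = Min D" unfolding D_def by auto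
  have m0min: "subdegree (t m0) \<le> subdegree (t m)" if "m \<in> M" for m
    unfolding m0d using fD(1) that unfolding D_def by (intro Min_le) auto
  define d where "d = subdegree (t m0)"
  have "fps_nth (sum t M) d = (\<Sum>m\<in>M. fps_nth (t m) d)" by (simp add: fps_sum_nth)
  also have "\<dots> = (\<Sum>m\<in>M. if m = m0 then fps_nth (t m0) d else 0)"
  proof (intro sum.cong refl)
    fix m assume mM: "m \<in> M"
    show "fps_nth (t m) d = (if m = m0 then fps_nth (t m0) d else 0)"
    proof (cases "m = m0")
      case False
      then have "subdegree (t m) \<noteq> d" using inj[OF mM m0M] unfolding d_def by auto
      then have "d < subdegree (t m)" using m0min[OF mM] unfolding d_def by auto
      then show ?thesis using False by (simp add: nth_less_subdegree_zero)
    qed simp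
  qed
  also have "\<dots> = fps_nth (t m0) d" using m0M fin by (simp add: sum.delta)
  finally have "fps_nth (sum t M) d \<noteq> 0" using nz[OF m0M] unfolding d_def by simp
  then show ?thesis by auto
qed


definition rbb :: "nat \<Rightarrow> 'a::comm_ring_1 fps" where
  "rbb m = [1, fps_X ^ 8, fps_X ^ 10, (- (fps_X ^ 41)), (- (3 * fps_X ^ 43 + 3 * fps_X ^ 68 + fps_X ^ 93)),
            (- (2 * fps_X ^ 45 + fps_X ^ 70))] ! m"
definition ee :: "nat \<Rightarrow> nat" where "ee m = [0, 8, 10, 41, 43, 45] ! m"

lemma good_bb: "m < 6 \<Longrightarrow> good (bb m)"
  by (auto simp: bb_def nth_Cons' eval_nat_numeral)

lemma rho_bb0: "rho (bb 0 :: 'a::comm_ring_1 ps3) = rbb 0"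
  unfolding bb_simps rbb_def by (simp add: rho_simps binom2 binom3 algebra_simps flip: power_add)
lemma rho_bb1: "rho (bb 1 :: 'a::comm_ring_1 ps3) = rbb 1"
  unfolding bb_simps rbb_def by (simp add: rho_simps binom2 binom3 algebra_simps flip: power_add)
lemma rho_bb2: "rho (bb 2 :: 'a::comm_ring_1 ps3) = rbb 2"
  unfolding bb_simps rbb_def by (simp add: rho_simps binom2 binom3 algebra_simps flip: power_add)
lemma rho_bb3: "rho (bb 3 :: 'a::comm_ring_1 ps3) = rbb 3"
  unfolding bb_simps rbb_def by (simp add: rho_simps binom2 binom3 algebra_simps flip: power_add)
lemma rho_bb4: "rho (bb 4 :: 'a::comm_ring_1 ps3) = rbb 4"
  unfolding bb_simps rbb_def by (simp add: rho_simps binom2 binom3 algebra_simps flip: power_add)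
lemma rho_bb5: "rho (bb 5 :: 'a::comm_ring_1 ps3) = rbb 5"
  unfolding bb_simps rbb_def by (simp add: rho_simps binom2 binom3 algebra_simps flip: power_add)
lemma rho_bb: "m < 6 \<Longrightarrow> rho (bb m :: 'a::comm_ring_1 ps3) = rbb m"
proof -
  assume "m < 6"
  then consider "m = 0" | "m = 1" | "m = 2" | "m = 3" | "m = 4" | "m = 5" by linarith
  then show ?thesis
    by cases (simp_all only: rho_bb0 rho_bb1 rho_bb2 rho_bb3 rho_bb4 rho_bb5)
qed

lemma rbbc0: assumes h2: "(2::'a::field) \<noteq> 0" and h3: "(3::'a) \<noteq> 0"
  shows "fps_nth (rbb 0 :: 'a fps) 0 \<noteq> 0 \<and> (\<forall>i < 0. fps_nth (rbb 0 :: 'a fps) i = 0)"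
  by (simp add: rbb_def numeral_fps_const h2 h3)
lemma rbbc1: assumes h2: "(2::'a::field) \<noteq> 0" and h3: "(3::'a) \<noteq> 0"
  shows "fps_nth (rbb 1 :: 'a fps) 8 \<noteq> 0 \<and> (\<forall>i < 8. fps_nth (rbb 1 :: 'a fps) i = 0)"
  by (simp add: rbb_def numeral_fps_const h2 h3)
lemma rbbc2: assumes h2: "(2::'a::field) \<noteq> 0" and h3: "(3::'a) \<noteq> 0"
  shows "fps_nth (rbb 2 :: 'a fps) 10 \<noteq> 0 \<and> (\<forall>i < 10. fps_nth (rbb 2 :: 'a fps) i = 0)"
  by (simp add: rbb_def numeral_fps_const h2 h3)
lemma rbbc3: assumes h2: "(2::'a::field) \<noteq> 0" and h3: "(3::'a) \<noteq> 0"
  shows "fps_nth (rbb 3 :: 'a fps) 41 \<noteq> 0 \<and> (\<forall>i < 41. fps_nth (rbb 3 :: 'a fps) i = 0)"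
  by (simp add: rbb_def numeral_fps_const h2 h3)
lemma rbbc4: assumes h2: "(2::'a::field) \<noteq> 0" and h3: "(3::'a) \<noteq> 0"
  shows "fps_nth (rbb 4 :: 'a fps) 43 \<noteq> 0 \<and> (\<forall>i < 43. fps_nth (rbb 4 :: 'a fps) i = 0)"
  by (simp add: rbb_def numeral_fps_const h2 h3)
lemma rbbc5: assumes h2: "(2::'a::field) \<noteq> 0" and h3: "(3::'a) \<noteq> 0"
  shows "fps_nth (rbb 5 :: 'a fps) 45 \<noteq> 0 \<and> (\<forall>i < 45. fps_nth (rbb 5 :: 'a fps) i = 0)"
  by (simp add: rbb_def numeral_fps_const h2 h3)

lemma rbb_nz_sub:
  assumes h2: "(2::'a::field) \<noteq> 0" and h3: "(3::'a) \<noteq> 0" and "m < 6"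
  shows "(rbb m :: 'a fps) \<noteq> 0 \<and> subdegree (rbb m :: 'a fps) = ee m"
proof -
  have ee: "ee 0 = 0" "ee 1 = 8" "ee 2 = 10" "ee 3 = 41" "ee 4 = 43" "ee 5 = 45"
    by (simp_all add: ee_def)
  have "fps_nth (rbb m :: 'a fps) (ee m) \<noteq> 0 \<and> (\<forall>i < ee m. fps_nth (rbb m :: 'a fps) i = 0)"
  proof -
    from \<open>m < 6\<close> consider "m = 0" | "m = 1" | "m = 2" | "m = 3" | "m = 4" | "m = 5" by linarith
    then show ?thesis
      using rbbc0[OF h2 h3] rbbc1[OF h2 h3] rbbc2[OF h2 h3] rbbc3[OF h2 h3] rbbc4[OF h2 h3] rbbc5[OF h2 h3]
      by cases (simp only: ee, blast)+
  qed
  then show ?thesis by (metis fps_zero_nth subdegreeI)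
qed

lemma ee_mod: "m < 6 \<Longrightarrow> m' < 6 \<Longrightarrow> ee m mod 6 = ee m' mod 6 \<Longrightarrow> m = m'"
proof -
  assume a: "m < 6" "m' < 6" "ee m mod 6 = ee m' mod 6"
  have "ee m mod 6 = [0,2,4,5,1,3] ! m" if "m < 6" for m
  proof -
    from that consider "m = 0" | "m = 1" | "m = 2" | "m = 3" | "m = 4" | "m = 5" by linarith
    then show ?thesis by cases (simp_all add: ee_def)
  qed
  with a have "[0,2,4,5,1,3::nat] ! m = [0,2,4,5,1,3] ! m'" by simp
  moreover have "\<forall>m<6. \<forall>m'<6. [0,2,4,5,1,3::nat] ! m = [0,2,4,5,1,3] ! m' \<longrightarrow> m = m'"
    by (simp add: numeral_eq_Suc All_less_Suc)
  ultimately show "m = m'" using a by blast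
qed

lemma xsum_zero: "xsum (\<lambda>k. cst 0) = (0 :: 'a::comm_ring_1 ps3)"
  by (rule ps3_ext) (simp add: c3_xs[of "\<lambda>_. 0", simplified])

lemma nf_inj:
  fixes a :: "nat \<Rightarrow> nat \<Rightarrow> 'a::field"
  assumes h2: "(2::'a) \<noteq> 0" and h3: "(3::'a) \<noteq> 0"
    and r: "rho (\<Sum>m<6. xsum (\<lambda>k. cst (a k m)) * bb m) = 0"
  shows "(\<Sum>m<6. xsum (\<lambda>k. cst (a k m)) * bb m) = 0"
proof -
  define t where "t m = rho (xsum (\<lambda>k. cst (a k m)) * bb m)" for m
  define M where "M = {m \<in> {..<6}. (\<lambda>k. a k m) \<noteq> (\<lambda>_. 0)}"
  have zero: "xsum (\<lambda>k. cst (a k m)) = 0" if "m \<notin> M" "m < 6" for m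
  proof -
    have eq: "(\<lambda>k. a k m) = (\<lambda>_. 0)" using that unfolding M_def by blast
    have "a k m = 0" for k using fun_cong[OF eq, of k] by simp
    then have "(\<lambda>k. cst (a k m)) = (\<lambda>k. cst 0)" by simp
    then show ?thesis using xsum_zero by metis
  qed
  have "(\<Sum>m<6. t m) = 0" using r unfolding t_def by (simp add: rho_sum)
  moreover have "(\<Sum>m<6. t m) = sum t M"
  proof (rule sum.mono_neutral_right)
    show "finite {..<6::nat}" by simp
    show "M \<subseteq> {..<6}" unfolding M_def by blast
    show "\<forall>m\<in>{..<6} - M. t m = 0"
    proof
      fix m assume "m \<in> {..<6} - M"
      then have "m \<notin> M" "m < 6" by auto
      then show "t m = 0" unfolding t_def zero[OF \<open>m \<notin> M\<close> \<open>m < 6\<close>] by (simp add: rho_0)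
    qed
  qed
  ultimately have s0: "sum t M = 0" by simp
  have tm: "t m \<noteq> 0 \<and> subdegree (t m) = 6 * (LEAST i. a i m \<noteq> 0) + ee m" if "m \<in> M" for m
  proof -
    have m6: "m < 6" and nz: "(\<lambda>k. a k m) \<noteq> (\<lambda>_. 0)" using that unfolding M_def by auto
    have tt: "t m = rho (xsum (\<lambda>k. cst (a k m))) * rbb m"
      unfolding t_def by (simp add: rho_mult_good[OF good_bb[OF m6]] rho_bb[OF m6])
    define L where "L = (LEAST i. a i m \<noteq> 0)"
    have A1: "rho (xsum (\<lambda>k. cst (a k m))) \<noteq> 0" and A2: "subdegree (rho (xsum (\<lambda>k. cst (a k m)))) = 6 * L"
      using rho_xs_subdeg[OF nz] unfolding L_def by auto
    have B1: "rbb m \<noteq> (0::'a fps)" and B2: "subdegree (rbb m :: 'a fps) = ee m"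
      using rbb_nz_sub[OF h2 h3 m6] by auto
    have "t m \<noteq> 0" unfolding tt using A1 B1 by simp
    moreover have "subdegree (t m) = 6 * L + ee m" unfolding tt
      using subdegree_mult[OF A1 B1] A2 B2 by simp
    ultimately show ?thesis unfolding L_def by blast
  qed
  have "M = {}"
  proof (rule ccontr)
    assume "M \<noteq> {}"
    have "sum t M \<noteq> 0"
    proof (rule sum_distinct_subdeg)
      show "finite M" unfolding M_def by auto
      show "M \<noteq> {}" by fact
      show "\<And>m. m \<in> M \<Longrightarrow> t m \<noteq> 0" using tm by blast
      fix m m' assume mM: "m \<in> M" and mM': "m' \<in> M" and eq: "subdegree (t m) = subdegree (t m')"
      then have "(6 * (LEAST i. a i m \<noteq> 0) + ee m) mod 6 = (6 * (LEAST i. a i m' \<noteq> 0) + ee m') mod 6"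
        using tm[OF mM] tm[OF mM'] by simp
      then have "ee m mod 6 = ee m' mod 6" by simp
      moreover have "m < 6" "m' < 6" using mM mM' unfolding M_def by auto
      ultimately show "m = m'" using ee_mod by blast
    qed
    then show False using s0 by simp
  qed
  then have "\<And>m. m < 6 \<Longrightarrow> xsum (\<lambda>k. cst (a k m)) = 0" using zero by blast
  then show ?thesis by (intro sum.neutral) simp
qed


lemma lin4:
  fixes c w :: "nat \<Rightarrow> nat \<Rightarrow> 'a::field"
  assumes n3: "n \<le> 3"
    and eq: "\<And>k j. k < 4 \<Longrightarrow> j < 4 \<Longrightarrow> (\<Sum>l<n. c k l * w l j) = d k j"
    and diag: "\<And>k j. k < 4 \<Longrightarrow> j < 4 \<Longrightarrow> k \<noteq> j \<Longrightarrow> d k j = 0"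
    and nz: "d 0 0 * (d 1 1 * (d 2 2 * (d 3 3 * 1))) \<noteq> 0"
  shows False
proof -
  define C where "C = mat 4 4 (\<lambda>(k,l). if l < n then c k l else 0)"
  define W where "W = mat 4 4 (\<lambda>(l,j). if l < n then w l j else 0)"
  define D where "D = mat 4 4 (\<lambda>(k,j). d k j)"
  define E :: "'a mat" where "E = mat 4 4 (\<lambda>(i,j). if i = j \<and> i < 3 then 1 else 0)"
  have CC: "C \<in> carrier_mat 4 4" "W \<in> carrier_mat 4 4" "D \<in> carrier_mat 4 4" "E \<in> carrier_mat 4 4"
    by (simp_all add: C_def W_def D_def E_def)
  have s4: "(\<Sum>l<4. (if l < n then f l else 0)) = (\<Sum>l<n. f l)" for f :: "nat \<Rightarrow> 'a"
  proof -
    have "(\<Sum>l<4. (if l < n then f l else 0)) = (\<Sum>l\<in>{..<4} \<inter> {l. l < n}. f l)"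
      by (simp add: sum.inter_restrict)
    also have "{..<4} \<inter> {l. l < n} = {..<n}" using n3 by auto
    finally show ?thesis .
  qed
  have "C * W = D"
  proof (rule eq_matI)
    fix k j assume k: "k < dim_row D" and j: "j < dim_col D"
    then have k4: "k < 4" and j4: "j < 4" by (auto simp: D_def)
    have "(C * W) $$ (k, j) = (\<Sum>l<4. C $$ (k, l) * W $$ (l, j))"
      using k4 j4 by (simp add: C_def W_def scalar_prod_def lessThan_atLeast0)
    also have "\<dots> = (\<Sum>l<4. (if l < n then c k l * w l j else 0))"
      using k4 j4 by (intro sum.cong) (auto simp: C_def W_def)
    also have "\<dots> = d k j" using s4 eq[OF k4 j4] by simp
    finally show "(C * W) $$ (k, j) = D $$ (k, j)" using k4 j4 by (simp add: D_def)
  qed (auto simp: C_def W_def D_def)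
  have "C * E = C"
  proof (rule eq_matI)
    fix k j assume k: "k < dim_row C" and j: "j < dim_col C"
    then have k4: "k < 4" and j4: "j < 4" by (auto simp: C_def)
    have "(C * E) $$ (k, j) = (\<Sum>l<4. C $$ (k, l) * E $$ (l, j))"
      using k4 j4 by (simp add: C_def E_def scalar_prod_def lessThan_atLeast0)
    also have "\<dots> = (\<Sum>l<4. if l = j then (if j < 3 then C $$ (k, j) else 0) else 0)"
      using k4 j4 by (intro sum.cong) (auto simp: E_def)
    also have "\<dots> = C $$ (k, j)" using j4 k4 n3 by (auto simp: C_def)
    finally show "(C * E) $$ (k, j) = C $$ (k, j)" .
  qed (auto simp: C_def E_def)
  have "det E = 0"
  proof -
    have "upper_triangular E" by (auto simp: E_def upper_triangular_def)
    then have "det E = prod_list (diag_mat E)" using det_upper_triangular CC(4) by blast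
    also have "\<dots> = 0" by (simp add: E_def diag_mat_def numeral_eq_Suc upt_rec)
    finally show ?thesis .
  qed
  then have dC: "det C = 0" using det_mult[OF CC(1) CC(4)] \<open>C * E = C\<close> by simp
  have "upper_triangular D" using diag by (auto simp: D_def upper_triangular_def)
  then have "det D = prod_list (diag_mat D)" using det_upper_triangular CC(3) by blast
  also have "\<dots> = d 0 0 * (d 1 1 * (d 2 2 * (d 3 3 * 1)))"
    by (simp add: D_def diag_mat_def numeral_eq_Suc upt_rec)
  finally have "det D \<noteq> 0" using nz by simp
  moreover have "det D = det C * det W" using det_mult[OF CC(1) CC(2)] \<open>C * W = D\<close> by simp
  ultimately show False using dC by simp
qed


lemma c3_numeral_mult[simp]: "ps3_coeff (numeral n * (A::'a::comm_ring_1 ps3)) i j l = numeral n * ps3_coeff A i j l"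
  using c3_cst_mult[of "numeral n" A i j l] by (simp add: cst_numeral)

lemma f1_pmon: "f1 = 3*pmon 0 3 0 - 4*pmon 1 1 1 + pmon 4 0 0 - 3*pmon 0 3 5 - 2*pmon 1 6 2 - pmon 2 4 3"
  unfolding f1_def pmon_def by (simp add: algebra_simps)
lemma f2_pmon: "f2 = 2*pmon 0 2 1 - 3*pmon 1 0 2 + pmon 3 1 0 - 2*pmon 0 7 2 - pmon 1 5 3"
  unfolding f2_def pmon_def by (simp add: algebra_simps)
lemma f3_pmon: "f3 = pmon 0 1 2 - 3*pmon 2 2 0 + 2*pmon 3 0 1 - pmon 0 6 3 - 2*pmon 1 4 4"
  unfolding f3_def pmon_def by (simp add: algebra_simps)
lemma f4_pmon: "f4 = pmon 0 0 3 - 2*pmon 1 3 0 + pmon 2 1 1 - pmon 0 5 4"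
  unfolding f4_def pmon_def by (simp add: algebra_simps)

definition lowz :: "'a::comm_ring_1 ps3 \<Rightarrow> bool" where
  "lowz F \<longleftrightarrow> (\<forall>i j l. i + j + l < 3 \<longrightarrow> ps3_coeff F i j l = 0)"

lemma lowz_mult: "lowz B \<Longrightarrow> lowz (A * B)"
  unfolding lowz_def c3_mult by (auto intro!: sum.neutral)

lemma lowz_sum: "(\<And>k. k \<in> S \<Longrightarrow> lowz (f k)) \<Longrightarrow> lowz (sum f S)"
  unfolding lowz_def c3_sum by (auto intro!: sum.neutral)

lemma deg3: assumes "lowz B" "i + j + l = 3"
  shows "ps3_coeff (A * B) i j l = ps3_coeff A 0 0 0 * ps3_coeff B i j l"
proof -
  have "ps3_coeff (A * B) i j l = (\<Sum>p\<le>l. \<Sum>q\<le>j. \<Sum>r\<le>i. if p = 0 \<and> q = 0 \<and> r = 0 then ps3_coeff A 0 0 0 * ps3_coeff B i j l else 0)"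
    unfolding c3_mult
  proof (intro sum.cong refl)
    fix p q r assume "p \<in> {..l}" "q \<in> {..j}" "r \<in> {..i}"
    then have "p \<le> l" "q \<le> j" "r \<le> i" by auto
    show "ps3_coeff A r q p * ps3_coeff B (i - r) (j - q) (l - p) = (if p = 0 \<and> q = 0 \<and> r = 0 then ps3_coeff A 0 0 0 * ps3_coeff B i j l else 0)"
    proof (cases "p = 0 \<and> q = 0 \<and> r = 0")
      case False
      then have "(i - r) + (j - q) + (l - p) < 3" using \<open>p \<le> l\<close> \<open>q \<le> j\<close> \<open>r \<le> i\<close> assms(2) by auto
      then show ?thesis using assms(1) False unfolding lowz_def by auto
    qed auto
  qed
  then show ?thesis by (simp only: sum3_delta)
qed

lemma lowz_fs: "lowz f1" "lowz f2" "lowz f3" "lowz f4"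
  unfolding lowz_def f1_pmon f2_pmon f3_pmon f4_pmon by auto

lemma fl_Suc0: "fl (Suc 0) = f2" by (simp add: fl_def)

lemma dt_0_0: "ps3_coeff (fl 0 :: 'a::comm_ring_1 ps3) 0 (3 - 0) 0 = 3"
  by (simp add: fl_simps fl_Suc0 f1_pmon f2_pmon f3_pmon f4_pmon)
lemma dt_0_1: "ps3_coeff (fl 0 :: 'a::comm_ring_1 ps3) 0 (3 - 1) 1 = 0"
  by (simp add: fl_simps fl_Suc0 f1_pmon f2_pmon f3_pmon f4_pmon)
lemma dt_0_2: "ps3_coeff (fl 0 :: 'a::comm_ring_1 ps3) 0 (3 - 2) 2 = 0"
  by (simp add: fl_simps fl_Suc0 f1_pmon f2_pmon f3_pmon f4_pmon)
lemma dt_0_3: "ps3_coeff (fl 0 :: 'a::comm_ring_1 ps3) 0 (3 - 3) 3 = 0"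
  by (simp add: fl_simps fl_Suc0 f1_pmon f2_pmon f3_pmon f4_pmon)
lemma dt_1_0: "ps3_coeff (fl 1 :: 'a::comm_ring_1 ps3) 0 (3 - 0) 0 = 0"
  by (simp add: fl_simps fl_Suc0 f1_pmon f2_pmon f3_pmon f4_pmon)
lemma dt_1_1: "ps3_coeff (fl 1 :: 'a::comm_ring_1 ps3) 0 (3 - 1) 1 = 2"
  by (simp add: fl_simps fl_Suc0 f1_pmon f2_pmon f3_pmon f4_pmon)
lemma dt_1_2: "ps3_coeff (fl 1 :: 'a::comm_ring_1 ps3) 0 (3 - 2) 2 = 0"
  by (simp add: fl_simps fl_Suc0 f1_pmon f2_pmon f3_pmon f4_pmon)
lemma dt_1_3: "ps3_coeff (fl 1 :: 'a::comm_ring_1 ps3) 0 (3 - 3) 3 = 0"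
  by (simp add: fl_simps fl_Suc0 f1_pmon f2_pmon f3_pmon f4_pmon)
lemma dt_2_0: "ps3_coeff (fl 2 :: 'a::comm_ring_1 ps3) 0 (3 - 0) 0 = 0"
  by (simp add: fl_simps fl_Suc0 f1_pmon f2_pmon f3_pmon f4_pmon)
lemma dt_2_1: "ps3_coeff (fl 2 :: 'a::comm_ring_1 ps3) 0 (3 - 1) 1 = 0"
  by (simp add: fl_simps fl_Suc0 f1_pmon f2_pmon f3_pmon f4_pmon)
lemma dt_2_2: "ps3_coeff (fl 2 :: 'a::comm_ring_1 ps3) 0 (3 - 2) 2 = 1"
  by (simp add: fl_simps fl_Suc0 f1_pmon f2_pmon f3_pmon f4_pmon)
lemma dt_2_3: "ps3_coeff (fl 2 :: 'a::comm_ring_1 ps3) 0 (3 - 3) 3 = 0"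
  by (simp add: fl_simps fl_Suc0 f1_pmon f2_pmon f3_pmon f4_pmon)
lemma dt_3_0: "ps3_coeff (fl 3 :: 'a::comm_ring_1 ps3) 0 (3 - 0) 0 = 0"
  by (simp add: fl_simps fl_Suc0 f1_pmon f2_pmon f3_pmon f4_pmon)
lemma dt_3_1: "ps3_coeff (fl 3 :: 'a::comm_ring_1 ps3) 0 (3 - 1) 1 = 0"
  by (simp add: fl_simps fl_Suc0 f1_pmon f2_pmon f3_pmon f4_pmon)
lemma dt_3_2: "ps3_coeff (fl 3 :: 'a::comm_ring_1 ps3) 0 (3 - 2) 2 = 0"
  by (simp add: fl_simps fl_Suc0 f1_pmon f2_pmon f3_pmon f4_pmon)
lemma dt_3_3: "ps3_coeff (fl 3 :: 'a::comm_ring_1 ps3) 0 (3 - 3) 3 = 1"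
  by (simp add: fl_simps fl_Suc0 f1_pmon f2_pmon f3_pmon f4_pmon)

lemma dtab: "k < 4 \<Longrightarrow> j < 4 \<Longrightarrow> ps3_coeff (fl k :: 'a::comm_ring_1 ps3) 0 (3 - j) j
   = (if k = j then [3, 2, 1, 1] ! k else 0)"
proof -
  assume "k < 4" "j < 4"
  then have "k \<in> {0,1,2,3}" "j \<in> {0,1,2,3}" by auto
  then show ?thesis using dt_0_0 dt_0_1 dt_0_2 dt_0_3 dt_1_0 dt_1_1 dt_1_2 dt_1_3 dt_2_0 dt_2_1 dt_2_2 dt_2_3 dt_3_0 dt_3_1 dt_3_2 dt_3_3 by auto
qed


lemma gen4: "gen_ideal [a, b, c, d] = {h 0 * a + h 1 * b + h 2 * c + h 3 * d | h :: nat \<Rightarrow> 'b::comm_ring_1. True}"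
  unfolding gen_ideal_def sum4 by (simp add: numeral_eq_Suc)

lemma gen_fl: "(\<Sum>m<4. G m * fl m) \<in> gen_ideal [f1, f2, f3, f4]"
  unfolding gen4 sum4 fl_simps by (intro CollectI exI[of _ G]) simp

lemma rho_gen: "x \<in> gen_ideal [f1, f2, f3, (f4 :: 'a::comm_ring_1 ps3)] \<Longrightarrow> rho x = 0"
proof -
  assume "x \<in> gen_ideal [f1, f2, f3, f4]"
  then obtain h :: "nat \<Rightarrow> 'a ps3" where "x = h 0 * f1 + h 1 * f2 + h 2 * f3 + h 3 * f4" unfolding gen4 by blast
  then show ?thesis by (simp add: rho_add rho_mult_good good_fs rho_f1 rho_f2 rho_f3 rho_f4)
qed

lemma lowz_add: "lowz A \<Longrightarrow> lowz B \<Longrightarrow> lowz (A + B)" by (simp add: lowz_def)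

lemma low_gen: "x \<in> gen_ideal [f1, f2, f3, (f4 :: 'a::comm_ring_1 ps3)] \<Longrightarrow> lowz x"
proof -
  assume "x \<in> gen_ideal [f1, f2, f3, f4]"
  then obtain h :: "nat \<Rightarrow> 'a ps3" where "x = h 0 * f1 + h 1 * f2 + h 2 * f3 + h 3 * f4" unfolding gen4 by blast
  moreover have "lowz (h 0 * f1 + h 1 * f2 + h 2 * f3 + h 3 * f4)"
    by (intro lowz_add lowz_mult lowz_fs)
  ultimately show ?thesis by simp
qed

lemma mem_gen: "l < length gs \<Longrightarrow> gs ! l \<in> gen_ideal gs"
proof -
  assume l: "l < length gs"
  have "(\<Sum>k<length gs. (if k = l then 1 else 0) * gs ! k) = gs ! l"
    using l by (simp add: if_distrib[of "\<lambda>x. x * _"] sum.delta cong: if_cong)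
  then show ?thesis unfolding gen_ideal_def by (intro CollectI exI[of _ "\<lambda>k. if k = l then 1 else 0"]) simp
qed

lemma ideal_eq:
  assumes h2: "(2::'a::field) \<noteq> 0" and h3: "(3::'a) \<noteq> 0"
  shows "(primeP :: 'a ps3 set) = gen_ideal [f1, f2, f3, f4]"
proof
  show "gen_ideal [f1, f2, f3, f4] \<subseteq> (primeP :: 'a ps3 set)"
    using rho_gen unfolding primeP_def by blast
  show "(primeP :: 'a ps3 set) \<subseteq> gen_ideal [f1, f2, f3, f4]"
  proof
    fix F :: "'a ps3" assume "F \<in> primeP"
    then have rF: "rho F = 0" by (simp add: primeP_def)
    obtain G a where Fe: "F = (\<Sum>m<4. G m * fl m) + (\<Sum>m<6. xsum (\<lambda>k. cst (a k m)) * bb m :: 'a ps3)"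
      using normal_form[OF h2 h3] by blast
    have r1: "rho (\<Sum>m<4. G m * fl m) = 0" using rho_gen[OF gen_fl] .
    have "rho (\<Sum>m<6. xsum (\<lambda>k. cst (a k m)) * bb m :: 'a ps3) = 0"
      using rF r1 by (subst (asm) Fe) (simp add: rho_add)
    then have "(\<Sum>m<6. xsum (\<lambda>k. cst (a k m)) * bb m :: 'a ps3) = 0"
      by (rule nf_inj[OF h2 h3])
    then have "F = (\<Sum>m<4. G m * fl m)" using Fe by simp
    then show "F \<in> gen_ideal [f1, f2, f3, f4]" using gen_fl by simp
  qed
qed

lemma minimal:
  assumes h2: "(2::'a::field) \<noteq> 0" and h3: "(3::'a) \<noteq> 0"
    and len: "length gs < 4" and eq: "(primeP :: 'a ps3 set) = gen_ideal gs"
  shows False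
proof -
  define n where "n = length gs"
  have Ieq: "gen_ideal gs = gen_ideal [f1, f2, f3, (f4 :: 'a ps3)]" using eq ideal_eq[OF h2 h3] by simp
  have lg: "lowz (gs ! l)" if "l < n" for l
    using low_gen mem_gen[of l gs] that Ieq unfolding n_def by auto
  have "\<forall>k. \<exists>h. k < 4 \<longrightarrow> fl k = (\<Sum>l<n. h l * gs ! l)"
  proof
    fix k
    show "\<exists>h. k < 4 \<longrightarrow> fl k = (\<Sum>l<n. h l * gs ! l)"
    proof (cases "k < 4")
      case True
      have "fl k \<in> gen_ideal [f1, f2, f3, (f4 :: 'a ps3)]"
        using mem_gen[of k "[f1, f2, f3, f4]"] True by (simp add: fl_def)
      then have "fl k \<in> gen_ideal gs" using Ieq by simp
      then obtain h where "fl k = (\<Sum>l<n. h l * gs ! l)" unfolding gen_ideal_def n_def by blast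
      then show ?thesis by blast
    qed simp
  qed
  then obtain hh where hh0: "\<forall>k. k < 4 \<longrightarrow> fl k = (\<Sum>l<n. hh k l * gs ! l)"
    by (rule choice[THEN exE])
  have hh: "fl k = (\<Sum>l<n. hh k l * gs ! l)" if "k < 4" for k using hh0 that by blast
  define c where "c k l = ps3_coeff (hh k l) 0 0 0" for k l
  define w where "w l j = ps3_coeff (gs ! l) 0 (3 - j) j" for l j
  define d where "d k j = ps3_coeff (fl k :: 'a ps3) 0 (3 - j) j" for k j
  have F1: "(\<Sum>l<n. c k l * w l j) = d k j" if "k < 4" "j < 4" for k j
  proof -
    have "d k j = (\<Sum>l<n. ps3_coeff (hh k l * gs ! l) 0 (3 - j) j)"
      unfolding d_def hh[OF that(1)] c3_sum ..
    also have "\<dots> = (\<Sum>l<n. c k l * w l j)"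
      unfolding c_def w_def using that(2) by (intro sum.cong refl deg3 lg) auto
    finally show ?thesis by simp
  qed
  have F2: "d k j = 0" if "k < 4" "j < 4" "k \<noteq> j" for k j
    using dtab[OF that(1,2)] that(3) unfolding d_def by simp
  have F3: "d 0 0 * (d 1 1 * (d 2 2 * (d 3 3 * 1))) \<noteq> 0"
  proof -
    have e: "d 0 0 = 3" "d 1 1 = 2" "d 2 2 = 1" "d 3 3 = 1"
      using dtab[where 'a='a, of 0 0] dtab[where 'a='a, of 1 1] dtab[where 'a='a, of 2 2] dtab[where 'a='a, of 3 3]
      unfolding d_def by simp_all
    show ?thesis unfolding e by (simp only: mult_1_right mult_eq_0_iff) (use h2 h3 in auto)
  qed
  have F0: "n \<le> 3" using len unfolding n_def by simp
  show False by (rule lin4[where n=n and c=c and w=w and d=d, OF F0 F1 F2 F3])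
qed

theorem mainTheorem5:
  assumes "CHAR('a::field) = 0 \<or> CHAR('a) \<ge> 5"
  shows "(primeP :: 'a ps3 set) = gen_ideal [f1, f2, f3, f4]
         \<and> (\<forall>gs. length gs < 4 \<longrightarrow> (primeP :: 'a ps3 set) \<noteq> gen_ideal gs)
         \<and> mu (primeP :: 'a ps3 set) = 4"
proof -
  have h2: "(2::'a) \<noteq> 0"
  proof
    assume "(2::'a) = 0"
    then have "of_nat 2 = (0::'a)" by simp
    then have "CHAR('a) dvd 2" by (simp only: of_nat_eq_0_iff_char_dvd)
    then show False using assms by (auto dest: dvd_imp_le)
  qed
  have h3: "(3::'a) \<noteq> 0"
  proof
    assume "(3::'a) = 0"
    then have "of_nat 3 = (0::'a)" by simp
    then have "CHAR('a) dvd 3" by (simp only: of_nat_eq_0_iff_char_dvd)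
    then show False using assms by (auto dest: dvd_imp_le)
  qed
  have A: "(primeP :: 'a ps3 set) = gen_ideal [f1, f2, f3, f4]" by (rule ideal_eq[OF h2 h3])
  have B: "\<forall>gs. length gs < 4 \<longrightarrow> (primeP :: 'a ps3 set) \<noteq> gen_ideal gs"
    using minimal[OF h2 h3] by blast
  have C: "mu (primeP :: 'a ps3 set) = 4"
    unfolding mu_def
  proof (rule Least_equality)
    show "\<exists>gs. length gs = 4 \<and> (primeP :: 'a ps3 set) = gen_ideal gs"
      using A by (intro exI[of _ "[f1, f2, f3, f4]"]) simp
    show "\<And>y. \<exists>gs. length gs = y \<and> (primeP :: 'a ps3 set) = gen_ideal gs \<Longrightarrow> 4 \<le> y"
    proof -
      fix y assume "\<exists>gs. length gs = y \<and> (primeP :: 'a ps3 set) = gen_ideal gs"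
      then obtain gs where "length gs = y" "(primeP :: 'a ps3 set) = gen_ideal gs" by blast
      then show "4 \<le> y" using B by (cases "y < 4") auto
    qed
  qed
  show ?thesis using A B C by blast
qed


end
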